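(* Let $\mathcal H$ be a complex pre-Hilbert space, let $M\in\mathbb N$, and for $j=1,\ldots,M$ let $a_j,b_j:\mathcal H\to\mathcal H$ be linear operators that possess adjoints $a_j^*,b_j^*:\mathcal H\to\mathcal H$ (i.e. $(a_j\varphi,\psi)=(\varphi,a_j^*\psi)$ and $(b_j\varphi,\psi)=(\varphi,b_j^*\psi)$ for all $\varphi,\psi\in\mathcal H$). Then, in the sense of quadratic forms on $\mathcal H$, \[ \pm\sum_{j,k=1}^M a_j^*b_k^*b_ja_k\;\leq\;\sum_{j,k=1}^M a_j^*b_k^*b_ka_j , \] that is, for every $\varphi\in\mathcal H$ and each choice of sign, $\pm\big(\varphi,\sum_{j,k} a_j^*b_k^*b_ja_k\varphi\big)\le \big(\varphi,\sum_{j,k} a_j^*b_k^*b_ka_j\varphi\big)$ (both sides being real).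
   Context: For operators $S,T$ on $\mathcal H$, $S\le T$ means $(\varphi,S\varphi)\le(\varphi,T\varphi)$ for all $\varphi\in\mathcal H$. *)

theory Defs
  imports "HOL-Analysis.Analysis"
begin

text \<open>A complex pre-Hilbert space is modelled as a type 'a with an abelian group
structure, a complex scalar multiplication sc making it a complex vector space,
and an inner product ip which is linear in the second and conjugate-linear in
the first argument, Hermitian, and positive definite (no completeness assumed).\<close>

definition complex_pre_hilbert ::
  "(complex \<Rightarrow> 'a::ab_group_add \<Rightarrow> 'a) \<Rightarrow> ('a \<Rightarrow> 'a \<Rightarrow> complex) \<Rightarrow> bool" where
  "complex_pre_hilbert sc ip \<longleftrightarrow>
     vector_space sc \<and>
     (\<forall>x y z. ip x (y + z) = ip x y + ip x z) \<and>
     (\<forall>c x y. ip x (sc c y) = c * ip x y) \<and>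
     (\<forall>x y. ip y x = cnj (ip x y)) \<and>
     (\<forall>x. Im (ip x x) = 0 \<and> Re (ip x x) \<ge> 0) \<and>
     (\<forall>x. ip x x = 0 \<longrightarrow> x = 0)"

definition is_adjoint :: "('a \<Rightarrow> 'a \<Rightarrow> complex) \<Rightarrow> ('a \<Rightarrow> 'a) \<Rightarrow> ('a \<Rightarrow> 'a) \<Rightarrow> bool" where
  "is_adjoint ip a as \<longleftrightarrow> (\<forall>\<phi> \<psi>. ip (a \<phi>) \<psi> = ip \<phi> (as \<psi>))"

end

theory Submission
  imports Defs
begin

lemma ip_add2: "complex_pre_hilbert sc ip \<Longrightarrow> ip x (y + z) = ip x y + ip x z"
  unfolding complex_pre_hilbert_def by blast
lemma ip_herm: "complex_pre_hilbert sc ip \<Longrightarrow> ip y x = cnj (ip x y)"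
  unfolding complex_pre_hilbert_def by blast
lemma ip_pos: "complex_pre_hilbert sc ip \<Longrightarrow> Im (ip x x) = 0"
   "complex_pre_hilbert sc ip \<Longrightarrow> Re (ip x x) \<ge> 0"
  unfolding complex_pre_hilbert_def by blast+

lemma ip_zero2:
  assumes H: "complex_pre_hilbert sc ip"
  shows "ip x 0 = 0"
proof -
  have "ip x (0+0) = ip x 0 + ip x 0" by (rule ip_add2[OF H])
  thus ?thesis by simp
qed

lemma ip_sum2:
  assumes H: "complex_pre_hilbert sc ip" and "finite S"
  shows "ip x (\<Sum>s\<in>S. u s) = (\<Sum>s\<in>S. ip x (u s))"
  using assms(2)
  by (induction S rule: finite_induct) (auto simp: ip_zero2[OF H] ip_add2[OF H])

lemma ip_add1:
  assumes H: "complex_pre_hilbert sc ip"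
  shows "ip (y + z) x = ip y x + ip z x"
proof -
  have "ip (y + z) x = cnj (ip x (y+z))" by (rule ip_herm[OF H])
  also have "\<dots> = cnj (ip x y) + cnj (ip x z)" by (simp add: ip_add2[OF H])
  also have "\<dots> = ip y x + ip z x" by (metis ip_herm[OF H])
  finally show ?thesis .
qed

lemma ip_neg2:
  assumes H: "complex_pre_hilbert sc ip"
  shows "ip x (- y) = - ip x y"
proof -
  have "ip x (y + - y) = ip x y + ip x (-y)" by (rule ip_add2[OF H])
  thus ?thesis using ip_zero2[OF H] by (simp add: eq_neg_iff_add_eq_0 add.commute)
qed

lemma ip_neg1:
  assumes H: "complex_pre_hilbert sc ip"
  shows "ip (- y) x = - ip y x"
proof -
  have "ip (- y) x = cnj (ip x (- y))" by (rule ip_herm[OF H])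
  also have "\<dots> = - cnj (ip x y)" by (simp add: ip_neg2[OF H])
  also have "\<dots> = - ip y x" by (metis ip_herm[OF H])
  finally show ?thesis .
qed

lemma norm_plus:
  assumes H: "complex_pre_hilbert sc ip"
  shows "0 \<le> Re (ip u u) + Re (ip v v) + 2 * Re (ip u v)"
    and "0 \<le> Re (ip u u) + Re (ip v v) - 2 * Re (ip u v)"
proof -
  have "ip (u+v) (u+v) = ip u u + ip v v + ip u v + ip v u"
    by (simp add: ip_add1[OF H] ip_add2[OF H])
  moreover have "Re (ip v u) = Re (ip u v)" using ip_herm[OF H, of u v] by simp
  ultimately show "0 \<le> Re (ip u u) + Re (ip v v) + 2 * Re (ip u v)"
    using ip_pos(2)[OF H, of "u+v"] by simp
next
  have "ip (u + - v) (u + - v) = ip u u + ip v v - ip u v - ip v u"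
    unfolding ip_add1[OF H] ip_add2[OF H] ip_neg1[OF H] ip_neg2[OF H] by simp
  moreover have "Re (ip v u) = Re (ip u v)" using ip_herm[OF H, of u v] by simp
  ultimately show "0 \<le> Re (ip u u) + Re (ip v v) - 2 * Re (ip u v)"
    using ip_pos(2)[OF H, of "u + - v"] by (simp del: diff_conv_add_uminus add_uminus_conv_diff)
qed

theorem lemma3p2:
  fixes sc :: "complex \<Rightarrow> 'a::ab_group_add \<Rightarrow> 'a"
    and ip :: "'a \<Rightarrow> 'a \<Rightarrow> complex"
    and M :: nat
    and a b as bs :: "nat \<Rightarrow> 'a \<Rightarrow> 'a"
  assumes H: "complex_pre_hilbert sc ip"
    and lin_a: "\<And>j. j \<in> {1..M} \<Longrightarrow> Vector_Spaces.linear sc sc (a j)"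
    and lin_b: "\<And>j. j \<in> {1..M} \<Longrightarrow> Vector_Spaces.linear sc sc (b j)"
    and adj_a: "\<And>j. j \<in> {1..M} \<Longrightarrow> is_adjoint ip (a j) (as j)"
    and adj_b: "\<And>j. j \<in> {1..M} \<Longrightarrow> is_adjoint ip (b j) (bs j)"
  shows "\<forall>\<phi>.
    (let L = ip \<phi> (\<Sum>j\<in>{1..M}. \<Sum>k\<in>{1..M}. as j (bs k (b j (a k \<phi>))));
         R = ip \<phi> (\<Sum>j\<in>{1..M}. \<Sum>k\<in>{1..M}. as j (bs k (b k (a j \<phi>))))
     in L \<in> \<real> \<and> R \<in> \<real> \<and> Re L \<le> Re R \<and> - Re L \<le> Re R)"
proof
  fix \<phi>
  define x where "x j k = b j (a k \<phi>)" for j k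
  define I where "I = {1..M}"
  have adj: "ip \<phi> (as j (bs k y)) = ip (x k j) y" if "j \<in> I" "k \<in> I" for j k y
    using adj_a[OF that(1)[unfolded I_def]] adj_b[OF that(2)[unfolded I_def]]
    unfolding is_adjoint_def x_def by simp
  define L where "L = ip \<phi> (\<Sum>j\<in>I. \<Sum>k\<in>I. as j (bs k (b j (a k \<phi>))))"
  define R where "R = ip \<phi> (\<Sum>j\<in>I. \<Sum>k\<in>I. as j (bs k (b k (a j \<phi>))))"
  have L: "L = (\<Sum>j\<in>I. \<Sum>k\<in>I. ip (x k j) (x j k))"
    unfolding L_def I_def by (simp add: ip_sum2[OF H] adj[unfolded I_def] x_def)
  have R: "R = (\<Sum>j\<in>I. \<Sum>k\<in>I. ip (x k j) (x k j))"
    unfolding R_def I_def by (simp add: ip_sum2[OF H] adj[unfolded I_def] x_def)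
  have cL: "cnj L = (\<Sum>j\<in>I. \<Sum>k\<in>I. ip (x j k) (x k j))"
    unfolding L by (simp only: cnj_sum) (intro sum.cong refl; metis ip_herm[OF H])
  also have "\<dots> = L" unfolding L by (rule sum.swap)
  finally have cL': "cnj L = L" .
  have Lr: "L \<in> \<real>" using cL' by (metis Reals_cnj_iff)
  have Rr: "R \<in> \<real>" unfolding R
    by (intro sum_in_Reals) (simp add: complex_is_Real_iff ip_pos(1)[OF H])
  have ReR: "Re R = (\<Sum>j\<in>I. \<Sum>k\<in>I. Re (ip (x k j) (x k j)))" unfolding R by (simp add: Re_sum)
  have ReR2: "Re R = (\<Sum>j\<in>I. \<Sum>k\<in>I. Re (ip (x j k) (x j k)))" unfolding ReR by (rule sum.swap)
  have ReL: "Re L = (\<Sum>j\<in>I. \<Sum>k\<in>I. Re (ip (x k j) (x j k)))" unfolding L by (simp add: Re_sum)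
  have "0 \<le> (\<Sum>j\<in>I. \<Sum>k\<in>I. Re (ip (x k j) (x k j)) + Re (ip (x j k) (x j k)) + 2 * Re (ip (x k j) (x j k)))"
    by (intro sum_nonneg norm_plus(1)[OF H])
  also have "\<dots> = (\<Sum>j\<in>I. \<Sum>k\<in>I. Re (ip (x k j) (x k j))) + (\<Sum>j\<in>I. \<Sum>k\<in>I. Re (ip (x j k) (x j k))) + 2 * (\<Sum>j\<in>I. \<Sum>k\<in>I. Re (ip (x k j) (x j k)))"
    by (simp add: sum.distrib sum_distrib_left)
  also have "\<dots> = Re R + Re R + 2 * Re L" by (simp only: ReR[symmetric] ReR2[symmetric] ReL[symmetric])
  finally have 1: "- Re L \<le> Re R" by simp
  have "0 \<le> (\<Sum>j\<in>I. \<Sum>k\<in>I. Re (ip (x k j) (x k j)) + Re (ip (x j k) (x j k)) - 2 * Re (ip (x k j) (x j k)))"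
    by (intro sum_nonneg norm_plus(2)[OF H])
  also have "\<dots> = (\<Sum>j\<in>I. \<Sum>k\<in>I. Re (ip (x k j) (x k j))) + (\<Sum>j\<in>I. \<Sum>k\<in>I. Re (ip (x j k) (x j k))) - 2 * (\<Sum>j\<in>I. \<Sum>k\<in>I. Re (ip (x k j) (x j k)))"
    by (simp add: sum.distrib sum_subtractf sum_distrib_left)
  also have "\<dots> = Re R + Re R - 2 * Re L" by (simp only: ReR[symmetric] ReR2[symmetric] ReL[symmetric])
  finally have 2: "Re L \<le> Re R" by simp
  show "let L = ip \<phi> (\<Sum>j\<in>{1..M}. \<Sum>k\<in>{1..M}. as j (bs k (b j (a k \<phi>))));
         R = ip \<phi> (\<Sum>j\<in>{1..M}. \<Sum>k\<in>{1..M}. as j (bs k (b k (a j \<phi>))))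
     in L \<in> \<real> \<and> R \<in> \<real> \<and> Re L \<le> Re R \<and> - Re L \<le> Re R"
    using Lr Rr 1 2 unfolding L_def R_def I_def Let_def by simp
qed

end
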